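(* Let $n$ be an odd positive integer and $k$ an integer with $1<k<n$ and $\gcd(n,k)=\gcd(n,k-1)=1$. Then there is exactly one quasigroup operation on $\{1,2,\dots,n\}$ that is idempotent and $k$-translatable with respect to the ordering $1,2,\dots,n$.
   Context: A groupoid on $\{1,\dots,n\}$ is $k$-translatable with respect to the ordering $1,\dots,n$ if $i\cdot j=(i-1)\cdot(j-k)$ for all $i\in\{2,\dots,n\}$, $j\in\{1,\dots,n\}$, where $j-k$ is taken modulo $n$ in $\{1,\dots,n\}$. Idempotent means $x\cdot x=x$ for all $x$. *)

theory Defs
  imports Main
begin

definition closed_op :: "int set \<Rightarrow> (int \<Rightarrow> int \<Rightarrow> int) \<Rightarrow> bool" where
  "closed_op S op \<longleftrightarrow> (\<forall>x\<in>S. \<forall>y\<in>S. op x y \<in> S)"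

definition quasigroup_op :: "int set \<Rightarrow> (int \<Rightarrow> int \<Rightarrow> int) \<Rightarrow> bool" where
  "quasigroup_op S op \<longleftrightarrow> closed_op S op \<and>
     (\<forall>a\<in>S. \<forall>b\<in>S. (\<exists>!x. x \<in> S \<and> op a x = b) \<and> (\<exists>!y. y \<in> S \<and> op y a = b))"

definition idempotent_op :: "int set \<Rightarrow> (int \<Rightarrow> int \<Rightarrow> int) \<Rightarrow> bool" where
  "idempotent_op S op \<longleftrightarrow> (\<forall>x\<in>S. op x x = x)"

definition modn :: "int \<Rightarrow> int \<Rightarrow> int" where
  "modn n x = ((x - 1) mod n) + 1"

definition k_translatable :: "int \<Rightarrow> int \<Rightarrow> (int \<Rightarrow> int \<Rightarrow> int) \<Rightarrow> bool" where
  "k_translatable n k op \<longleftrightarrow>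
     (\<forall>i\<in>{2..n}. \<forall>j\<in>{1..n}. op i j = op (i - 1) (modn n (j - k)))"

end

theory Submission
  imports Defs "HOL-Number_Theory.Cong"
begin

lemma modn_in: "n > 0 \<Longrightarrow> modn n x \<in> {1..n}"
  by (simp add: modn_def) (smt (verit) pos_mod_bound pos_mod_sign)

lemma modn_id: "x \<in> {1..n} \<Longrightarrow> modn n x = x"
  by (simp add: modn_def)

lemma modn_eq: "modn n x = modn n y \<longleftrightarrow> [x = y] (mod n)"
  unfolding modn_def cong_iff_dvd_diff by (simp add: mod_eq_dvd_iff)

lemma modn_cong: "[modn n x = x] (mod n)"
  by (simp add: modn_def cong_def mod_add_left_eq)

lemma op_shift0:
  assumes tr: "k_translatable n k op" and n: "n > 0" and i1: "1 \<le> i"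
  shows "i \<le> n \<longrightarrow> (\<forall>j\<in>{1..n}. op i j = op 1 (modn n (j - (i - 1) * k)))"
  using i1
proof (induction i rule: int_ge_induct)
  case base
  then show ?case using modn_id by simp
next
  case (step i)
  show ?case
  proof (intro impI ballI)
    fix j assume "i + 1 \<le> n" "j \<in> {1..n}"
    have "op (i+1) j = op i (modn n (j - k))"
      using tr step.hyps \<open>i + 1 \<le> n\<close> \<open>j \<in> {1..n}\<close> unfolding k_translatable_def by auto
    also have "\<dots> = op 1 (modn n (modn n (j - k) - (i - 1) * k))"
      using step \<open>i + 1 \<le> n\<close> modn_in[OF n] by auto
    also have "\<dots> = op 1 (modn n (j - (i + 1 - 1) * k))"
    proof -
      have "[modn n (j - k) - (i - 1) * k = (j - k) - (i - 1) * k] (mod n)"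
        by (intro cong_diff modn_cong cong_refl)
      moreover have "(j - k) - (i - 1) * k = j - (i + 1 - 1) * k" by (simp add: algebra_simps)
      ultimately show ?thesis using modn_eq by metis
    qed
    finally show "op (i + 1) j = op 1 (modn n (j - (i + 1 - 1) * k))" .
  qed
qed

lemma op_shift:
  assumes tr: "k_translatable n k op" and n: "n > 0"
  shows "i \<in> {1..n} \<Longrightarrow> j \<in> {1..n} \<Longrightarrow> op i j = op 1 (modn n (j - (i - 1) * k))"
  using op_shift0[OF tr n, of i] by auto

theorem corollary8p10:
  fixes n k :: int
  assumes "n > 0" and "odd n" and "1 < k" and "k < n"
    and "gcd n k = 1" and "gcd n (k - 1) = 1"
  shows "\<exists>op. quasigroup_op {1..n} op \<and> idempotent_op {1..n} op \<and> k_translatable n k op \<and>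
           (\<forall>op'. quasigroup_op {1..n} op' \<and> idempotent_op {1..n} op' \<and> k_translatable n k op'
              \<longrightarrow> (\<forall>x\<in>{1..n}. \<forall>y\<in>{1..n}. op' x y = op x y))"
proof -
  have n: "n > 0" by fact
  have c1: "coprime (1 - k) n"
    using assms(6) by (metis coprime_iff_gcd_eq_1 coprime_minus_left_iff gcd.commute minus_diff_eq)
  have c2: "coprime k n" using assms(5) by (metis coprime_iff_gcd_eq_1 gcd.commute)
  obtain u where u: "[(1 - k) * u = 1] (mod n)" using cong_solve_coprime_int[OF c1] by blast
  obtain v where v: "[k * v = 1] (mod n)" using cong_solve_coprime_int[OF c2] by blast
  define op where "op i j = modn n (u * (j - i * k))" for i j
  have S: "\<And>x. modn n x \<in> {1..n}" using modn_in[OF n] .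
  have idem: "idempotent_op {1..n} op"
    unfolding idempotent_op_def op_def
  proof
    fix x :: int assume x: "x \<in> {1..n}"
    have "[u * (x - x * k) = x * ((1 - k) * u)] (mod n)" by (simp add: algebra_simps)
    also have "[x * ((1 - k) * u) = x * 1] (mod n)" by (intro cong_mult cong_refl u)
    finally have "modn n (u * (x - x * k)) = modn n x" using modn_eq by simp
    then show "modn n (u * (x - x * k)) = x" using modn_id[OF x] by simp
  qed
  have tr: "k_translatable n k op"
    unfolding k_translatable_def op_def
  proof (intro ballI)
    fix i j assume "i \<in> {2..n}" "j \<in> {1..n}"
    have "[u * (modn n (j - k) - (i - 1) * k) = u * ((j - k) - (i - 1) * k)] (mod n)"
      by (intro cong_mult cong_diff modn_cong cong_refl)
    moreover have "u * ((j - k) - (i - 1) * k) = u * (j - i * k)" by (simp add: algebra_simps)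
    ultimately show "modn n (u * (j - i * k)) = modn n (u * (modn n (j - k) - (i - 1) * k))"
      using modn_eq by (metis cong_sym)
  qed
  have quasi: "quasigroup_op {1..n} op"
    unfolding quasigroup_op_def closed_op_def
  proof (intro conjI ballI)
    fix x y show "op x y \<in> {1..n}" unfolding op_def using S by simp
  next
    fix a b :: int assume a: "a \<in> {1..n}" and b: "b \<in> {1..n}"
    show "\<exists>!x. x \<in> {1..n} \<and> op a x = b"
    proof
      let ?x = "modn n ((1 - k) * b + a * k)"
      have "[u * (?x - a * k) = u * (((1 - k) * b + a * k) - a * k)] (mod n)"
        by (intro cong_mult cong_diff modn_cong cong_refl)
      also have "u * (((1 - k) * b + a * k) - a * k) = b * ((1 - k) * u)" by (simp add: algebra_simps)
      also have "[b * ((1 - k) * u) = b * 1] (mod n)" by (intro cong_mult cong_refl u)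
      finally have "op a ?x = modn n b" unfolding op_def using modn_eq by simp
      then show "?x \<in> {1..n} \<and> op a ?x = b" using S modn_id[OF b] by simp
    next
      fix x assume x: "x \<in> {1..n} \<and> op a x = b"
      have h: "[u * (x - a * k) = b] (mod n)"
        using x modn_cong[of n "u * (x - a * k)"] unfolding op_def by (simp add: cong_sym)
      have e: "(1 - k) * (u * (x - a * k)) + a * k = ((1 - k) * u) * (x - a * k) + a * k"
        by (simp add: algebra_simps)
      have c: "[((1 - k) * u) * (x - a * k) + a * k = 1 * (x - a * k) + a * k] (mod n)"
        by (intro cong_add cong_mult cong_refl u)
      have c2: "[(1 - k) * (u * (x - a * k)) + a * k = (1 - k) * b + a * k] (mod n)"
        by (intro cong_add cong_mult cong_refl h)
      have "[x = (1 - k) * (u * (x - a * k)) + a * k] (mod n)" using cong_sym[OF c] by (simp add: mult.assoc)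
      from this c2 have "[x = (1 - k) * b + a * k] (mod n)" by (rule cong_trans)
      then show "x = modn n ((1 - k) * b + a * k)"
        using x by (metis modn_eq modn_id)
    qed
  next
    fix a b :: int assume a: "a \<in> {1..n}" and b: "b \<in> {1..n}"
    show "\<exists>!y. y \<in> {1..n} \<and> op y a = b"
    proof
      let ?y = "modn n (v * (a - (1 - k) * b))"
      have "[u * (a - ?y * k) = u * (a - (v * (a - (1 - k) * b)) * k)] (mod n)"
        by (intro cong_mult cong_diff modn_cong cong_refl)
      also have "u * (a - (v * (a - (1 - k) * b)) * k) = u * a - (k * v) * (u * a) + b * ((1 - k) * u) * (k * v)"
        by (simp add: algebra_simps)
      also have "[u * a - (k * v) * (u * a) + b * ((1 - k) * u) * (k * v) = u * a - 1 * (u * a) + b * 1 * 1] (mod n)"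
        by (intro cong_add cong_diff cong_mult cong_refl u v)
      finally have "op ?y a = modn n b" unfolding op_def using modn_eq by simp
      then show "?y \<in> {1..n} \<and> op ?y a = b" using S modn_id[OF b] by simp
    next
      fix y assume y: "y \<in> {1..n} \<and> op y a = b"
      have h: "[u * (a - y * k) = b] (mod n)"
        using y modn_cong[of n "u * (a - y * k)"] unfolding op_def by (simp add: cong_sym)
      have A: "[v * (a - (1 - k) * (u * (a - y * k))) = v * (a - (1 - k) * b)] (mod n)"
        by (intro cong_mult cong_diff cong_refl h)
      have B: "v * (a - (1 - k) * (u * (a - y * k))) = v * a - ((1 - k) * u) * (v * a) + y * ((1 - k) * u) * (k * v)"
        by (simp add: algebra_simps)
      have C: "[v * a - ((1 - k) * u) * (v * a) + y * ((1 - k) * u) * (k * v) = v * a - 1 * (v * a) + y * 1 * 1] (mod n)"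
        by (intro cong_add cong_diff cong_mult cong_refl u v)
      have D: "[v * (a - (1 - k) * (u * (a - y * k))) = y] (mod n)"
        using C unfolding B by simp
      have "[y = v * (a - (1 - k) * b)] (mod n)"
        using cong_trans[OF cong_sym[OF D] A] .
      then show "y = modn n (v * (a - (1 - k) * b))"
        using y by (metis modn_eq modn_id)
    qed
  qed
  have uniq: "op' x y = op x y"
    if h: "quasigroup_op {1..n} op' \<and> idempotent_op {1..n} op' \<and> k_translatable n k op'"
      and x: "x \<in> {1..n}" and y: "y \<in> {1..n}" for op' x y
  proof -
    have row: "\<And>t. t \<in> {1..n} \<Longrightarrow> op' 1 t = op 1 t"
    proof -
      fix t :: int assume t: "t \<in> {1..n}"
      define i where "i = modn n (u * (t - k))"
      have i: "i \<in> {1..n}" using S i_def by simp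
      have "[i - (i - 1) * k = (1 - k) * i + k] (mod n)" by (simp add: algebra_simps)
      also have "[(1 - k) * i + k = (1 - k) * (u * (t - k)) + k] (mod n)"
        unfolding i_def by (intro cong_add cong_mult modn_cong cong_refl)
      also have "(1 - k) * (u * (t - k)) + k = ((1 - k) * u) * (t - k) + k" by (simp add: algebra_simps)
      also have "[((1 - k) * u) * (t - k) + k = 1 * (t - k) + k] (mod n)"
        by (intro cong_add cong_mult cong_refl u)
      finally have "modn n (i - (i - 1) * k) = t" using modn_eq modn_id[OF t] by (metis add_diff_cancel_right' diff_add_cancel mult_1)
      moreover have "op' i i = i" using h i unfolding idempotent_op_def by auto
      moreover have "op i i = i" using idem i unfolding idempotent_op_def by auto
      ultimately show "op' 1 t = op 1 t"
        using op_shift[OF _ n, of k op' i i] op_shift[OF tr n, of i i] h i by auto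
    qed
    show ?thesis
      using op_shift[OF _ n, of k op' x y] op_shift[OF tr n, of x y] h x y row S by auto
  qed
  show ?thesis using quasi idem tr uniq by blast
qed

end
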